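(* Let $p\ge1$, let $\mathcal{R}\subseteq\mathbb{R}$, and let $T:\mathbb{R}^M\times\cdots\times\mathbb{R}^M\to\mathbb{R}^D$ ($N$ factors) be a real $N$-linear map, $T(a^{(1)},\dots,a^{(N)})_i=\sum_sT_{i,s}\prod_ka^{(k)}_{s_k}$, which is a contraction on $\mathcal{R}^M\times\cdots\times\mathcal{R}^M$ with respect to the $p$-norm: $\|T(a^{(1)},\dots,a^{(N)})\|_p\le\prod_k\|a^{(k)}\|_p$ for all $a^{(k)}\in\mathcal{R}^M$. Then every local hidden variable model whose values lie in $\mathcal{R}$ satisfies $$\Big\|\big\langle T(A^{(1)},\dots,A^{(N)})\big\rangle\Big\|_p^p\le\Big\langle\prod_{k=1}^N\|A^{(k)}\|_p^p\Big\rangle,$$ whenever the right-hand side is finite.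
   Context: $\|a\|_p=(\sum_j|a_j|^p)^{1/p}$. A local hidden variable model is a probability space $(\Lambda,\mu)$ with measurable functions $A^{(k)}_j:\Lambda\to\mathcal{R}$ ($k=1,\dots,N$ site, $j=1,\dots,M$ observable); $A^{(k)}=(A^{(k)}_1,\dots,A^{(k)}_M)$ and $\langle\cdot\rangle$ is expectation w.r.t. $\mu$, taken componentwise for vectors. *)

theory Defs
  imports "HOL-Probability.Probability"
begin

definition pnorm :: "real \<Rightarrow> nat \<Rightarrow> (nat \<Rightarrow> real) \<Rightarrow> real" where
  "pnorm p n a = (\<Sum>j<n. \<bar>a j\<bar> powr p) powr (1 / p)"

definition multilin :: "nat \<Rightarrow> nat \<Rightarrow> (nat \<Rightarrow> (nat \<Rightarrow> nat) \<Rightarrow> real)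
    \<Rightarrow> (nat \<Rightarrow> nat \<Rightarrow> real) \<Rightarrow> nat \<Rightarrow> real" where
  "multilin N M Tc a i =
     (\<Sum>s\<in>PiE {..<N} (\<lambda>_. {..<M}). Tc i s * (\<Prod>k<N. a k (s k)))"

end

theory Submission
  imports Defs
begin

lemma pnorm_powr:
  assumes "p \<ge> 1"
  shows "pnorm p n a powr p = (\<Sum>j<n. \<bar>a j\<bar> powr p)"
proof -
  have "pnorm p n a powr p = (\<Sum>j<n. \<bar>a j\<bar> powr p) powr (1/p * p)"
    unfolding pnorm_def by (simp add: powr_powr)
  also have "1/p * p = 1" using assms by simp
  finally show ?thesis by (simp add: sum_nonneg)
qed

lemma pnorm_nonneg: "pnorm p n a \<ge> 0"
  unfolding pnorm_def by simp

lemma powr_convex0: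
  assumes "(p::real) \<ge> 1"
  shows "convex_on {0..} (\<lambda>x. x powr p)"
proof (rule convex_on_linorderI)
  fix t x y :: real
  assume t: "t > 0" "t < 1" and xy: "x \<in> {0..}" "y \<in> {0..}" "x < y"
  show "((1 - t) *\<^sub>R x + t *\<^sub>R y) powr p \<le> (1 - t) * x powr p + t * y powr p"
  proof (cases "x = 0")
    case True
    have "t powr p \<le> t powr 1"
      by (rule powr_mono') (use t assms in auto)
    then have "t powr p * y powr p \<le> t * y powr p" using t by (intro mult_right_mono) auto
    then show ?thesis using True t xy by (simp add: powr_mult)
  next
    case False
    then have "x > 0" "y > 0" using xy by auto
    then show ?thesis using convex_onD[OF powr_convex[OF assms], of t x y] t by auto
  qed
qed (simp add: convex_real_interval)

lemma abs_powr_convex: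
  assumes "(p::real) \<ge> 1"
  shows "convex_on UNIV (\<lambda>x. \<bar>x\<bar> powr p)"
proof (rule convex_onI)
  fix t x y :: real
  assume t: "t > 0" "t < 1"
  have "\<bar>(1 - t) *\<^sub>R x + t *\<^sub>R y\<bar> powr p \<le> ((1 - t) *\<^sub>R \<bar>x\<bar> + t *\<^sub>R \<bar>y\<bar>) powr p"
    apply (rule powr_mono2)
    using t assms by (auto simp: abs_mult intro!: order_trans[OF abs_triangle_ineq])
  also have "\<dots> \<le> (1 - t) * \<bar>x\<bar> powr p + t * \<bar>y\<bar> powr p"
    using convex_onD[OF powr_convex0[OF assms], of t "\<bar>x\<bar>" "\<bar>y\<bar>"] t by auto
  finally show "\<bar>(1 - t) *\<^sub>R x + t *\<^sub>R y\<bar> powr p \<le> (1 - t) * \<bar>x\<bar> powr p + t * \<bar>y\<bar> powr p" .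
qed auto

theorem proposition8:
  fixes p :: real and N M D :: nat and R :: "real set"
    and Tc :: "nat \<Rightarrow> (nat \<Rightarrow> nat) \<Rightarrow> real"
    and \<mu> :: "'l measure" and A :: "nat \<Rightarrow> nat \<Rightarrow> 'l \<Rightarrow> real"
  assumes p: "p \<ge> 1"
    and contraction: "\<And>a. (\<And>k j. k < N \<Longrightarrow> j < M \<Longrightarrow> a k j \<in> R) \<Longrightarrow>
        pnorm p D (multilin N M Tc a) \<le> (\<Prod>k<N. pnorm p M (a k))"
    and prob: "prob_space \<mu>"
    and meas: "\<And>k j. k < N \<Longrightarrow> j < M \<Longrightarrow> A k j \<in> borel_measurable \<mu>"
    and vals: "\<And>k j x. k < N \<Longrightarrow> j < M \<Longrightarrow> x \<in> space \<mu> \<Longrightarrow> A k j x \<in> R"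
    and finite_rhs: "(\<integral>\<^sup>+ x. ennreal (\<Prod>k<N. pnorm p M (\<lambda>j. A k j x) powr p) \<partial>\<mu>) < \<infinity>"
  shows "pnorm p D (\<lambda>i. \<integral>x. multilin N M Tc (\<lambda>k j. A k j x) i \<partial>\<mu>) powr p
           \<le> (\<integral>x. (\<Prod>k<N. pnorm p M (\<lambda>j. A k j x) powr p) \<partial>\<mu>)"
proof -
  define f where "f i x = multilin N M Tc (\<lambda>k j. A k j x) i" for i x
  define G where "G x = (\<Prod>k<N. pnorm p M (\<lambda>j. A k j x) powr p)" for x
  have Gnn: "G x \<ge> 0" for x unfolding G_def by (simp add: prod_nonneg)
  have fmeas: "f i \<in> borel_measurable \<mu>" for i
    unfolding f_def multilin_def
  proof (intro borel_measurable_sum borel_measurable_times borel_measurable_const borel_measurable_prod)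
    fix s k assume "s \<in> PiE {..<N} (\<lambda>_. {..<M})" "k \<in> {..<N}"
    then show "(\<lambda>x. A k (s k) x) \<in> borel_measurable \<mu>" by (intro meas) auto
  qed
  have Gmeas: "G \<in> borel_measurable \<mu>"
    unfolding G_def pnorm_def
    by (intro borel_measurable_prod powr_real_measurable borel_measurable_sum borel_measurable_abs
        borel_measurable_const meas) auto
  have Gint: "integrable \<mu> G"
    by (rule integrableI_bounded[OF Gmeas]) (use finite_rhs Gnn in \<open>simp add: G_def\<close>)
  have pw: "(\<Sum>i<D. \<bar>f i x\<bar> powr p) \<le> G x" if x: "x \<in> space \<mu>" for x
  proof -
    have c: "pnorm p D (\<lambda>i. f i x) \<le> (\<Prod>k<N. pnorm p M (\<lambda>j. A k j x))"
      unfolding f_def using contraction[of "\<lambda>k j. A k j x"] vals x by auto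
    have "(\<Sum>i<D. \<bar>f i x\<bar> powr p) = pnorm p D (\<lambda>i. f i x) powr p"
      using pnorm_powr[OF p] by simp
    also have "\<dots> \<le> (\<Prod>k<N. pnorm p M (\<lambda>j. A k j x)) powr p"
      by (rule powr_mono2) (use p c pnorm_nonneg in auto)
    also have "\<dots> = G x" unfolding G_def by (rule prod_powr_distrib)
    finally show ?thesis .
  qed
  have pwi: "\<bar>f i x\<bar> powr p \<le> G x" if "x \<in> space \<mu>" "i < D" for i x
    using pw[OF that(1)] member_le_sum[of i "{..<D}" "\<lambda>i. \<bar>f i x\<bar> powr p"] that(2) by auto
  have fpmeas: "(\<lambda>x. \<bar>f i x\<bar> powr p) \<in> borel_measurable \<mu>" for i
    by (intro powr_real_measurable borel_measurable_abs borel_measurable_const fmeas)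
  have fpint: "integrable \<mu> (\<lambda>x. \<bar>f i x\<bar> powr p)" if "i < D" for i
    by (rule Bochner_Integration.integrable_bound[OF Gint fpmeas]) (use pwi that Gnn in auto)
  have fint: "integrable \<mu> (f i)" if "i < D" for i
  proof (rule Bochner_Integration.integrable_bound[of _ "\<lambda>x. 1 + G x"])
    show "integrable \<mu> (\<lambda>x. 1 + G x)"
      using Gint finite_measure.integrable_const[OF prob_space.finite_measure[OF prob]] by (intro Bochner_Integration.integrable_add) auto
    show "AE x in \<mu>. norm (f i x) \<le> norm (1 + G x)"
    proof (rule AE_I2)
      fix x assume x: "x \<in> space \<mu>"
      have "\<bar>f i x\<bar> \<le> 1 + \<bar>f i x\<bar> powr p"
      proof (cases "\<bar>f i x\<bar> \<le> 1")
        case False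
        then have "\<bar>f i x\<bar> powr 1 \<le> \<bar>f i x\<bar> powr p" by (intro powr_mono) (use p in auto)
        then show ?thesis using False by simp
      qed (simp add: add_increasing2)
      then show "norm (f i x) \<le> norm (1 + G x)" using pwi[OF x that] Gnn[of x] by auto
    qed
  qed (rule fmeas)
  have jen: "\<bar>integral\<^sup>L \<mu> (f i)\<bar> powr p \<le> (\<integral>x. \<bar>f i x\<bar> powr p \<partial>\<mu>)" if "i < D" for i
    using prob_space.jensens_inequality[OF prob fint[OF that], of UNIV _ _ "\<lambda>x. \<bar>x\<bar> powr p"]
      fpint[OF that] abs_powr_convex[OF p] by auto
  have "pnorm p D (\<lambda>i. integral\<^sup>L \<mu> (f i)) powr p = (\<Sum>i<D. \<bar>integral\<^sup>L \<mu> (f i)\<bar> powr p)"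
    by (rule pnorm_powr[OF p])
  also have "\<dots> \<le> (\<Sum>i<D. \<integral>x. \<bar>f i x\<bar> powr p \<partial>\<mu>)"
    by (rule sum_mono) (use jen in auto)
  also have "\<dots> = (\<integral>x. (\<Sum>i<D. \<bar>f i x\<bar> powr p) \<partial>\<mu>)"
    by (rule Bochner_Integration.integral_sum[symmetric]) (use fpint in auto)
  also have "\<dots> \<le> integral\<^sup>L \<mu> G"
    by (rule integral_mono) (use fpint Gint pw in \<open>auto intro!: Bochner_Integration.integrable_sum\<close>)
  finally show ?thesis unfolding f_def G_def .
qed

end
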